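(* Write $Q:=3^\ell$ for some $\ell\ge 3$. Let $n_1,n_2,n_3,n_5,n_9$ be nonnegative integers for which $n_1+2n_2+3n_3+5n_5+9n_9=Q-1$ and the union of the base-$3$ expansions of the $n_j$'s consists of one copy of each $3^i$ with $1\le i\le\ell-2$ along with some partition of $2$. Then the base-$3$ expansion of $n_5$ contains $Q/9$, and the base-$3$ expansion of $n_9$ contains $Q/27$.
   Context: A term of the base-$p$ expansion of a nonnegative integer $m=\sum_j b_jp^j$ (with $0\le b_j\le p-1$) is some $b_jp^j$ with $b_j>0$. The union of the base-$p$ expansions of several integers means the multiset of all terms of all these integers. "Some partition of $2$" means the remaining terms (in the $3^0$ place) are either one copy of $2$ or two copies of $1$. *)

theory Defs
  imports Main "HOL-Library.Multiset"
begin

definition digit :: "nat \<Rightarrow> nat \<Rightarrow> nat \<Rightarrow> nat" where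
  "digit p m j = m div p ^ j mod p"

(* multiset of terms b_j p^j (b_j > 0) of the base-p expansion of m;
   digits j > m are zero for p \<ge> 2, so j \<le> m suffices *)
definition base_terms :: "nat \<Rightarrow> nat \<Rightarrow> nat multiset" where
  "base_terms p m = mset (map (\<lambda>j. digit p m j * p ^ j)
                          (filter (\<lambda>j. digit p m j > 0) [0..<Suc m]))"

end

theory Submission
  imports Defs
begin


lemma pow3_unique:
  assumes "a \<in> {1,2::nat}" "b \<in> {1,2::nat}" "a * 3^j = b * 3^i"
  shows "j = i \<and> a = b"
proof -
  have "\<not> j < i" if "a \<in> {1,2::nat}" "a * 3^j = b * 3^i" for i j and a b :: nat
  proof
    assume "j < i"
    then have "(3::nat)^i = 3^j * 3^(i-j)" by (simp flip: power_add)
    with that have "a = b * 3^(i-j)" by simp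
    moreover have "(3::nat) dvd 3^(i-j)" using \<open>j<i\<close> by simp
    ultimately have "3 dvd a" by simp
    with that(1) show False by auto
  qed
  from this[of a j b i] this[of b i a j] assms have "j = i" by auto
  with assms show ?thesis by simp
qed

lemma cnt:
  assumes "d \<in> {1,2::nat}"
  shows "count (base_terms 3 n) (d * 3^i) = (if digit 3 n i = d then 1 else 0)"
proof -
  have "count (base_terms 3 n) (d * 3^i)
      = length (filter (\<lambda>j. 0 < digit 3 n j \<and> digit 3 n j * 3^j = d * 3^i) [0..<Suc n])"
    unfolding base_terms_def count_mset count_list_eq_length_filter
    by (simp add: filter_map comp_def filter_filter conj_commute eq_commute[of "d * 3^i"])
  also have "(\<lambda>j. 0 < digit 3 n j \<and> digit 3 n j * 3^j = d * 3^i) = (\<lambda>j. j = i \<and> digit 3 n i = d)"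
  proof (rule ext)
    fix j
    have "digit 3 n j < 3" by (simp add: digit_def)
    then have "0 < digit 3 n j \<Longrightarrow> digit 3 n j \<in> {1,2}" by auto
    then show "(0 < digit 3 n j \<and> digit 3 n j * 3^j = d * 3^i) = (j = i \<and> digit 3 n i = d)"
      using pow3_unique[of "digit 3 n j" d j i] assms by auto
  qed
  also have "length (filter (\<lambda>j. j = i \<and> digit 3 n i = d) [0..<Suc n]) = card ({j. j = i \<and> digit 3 n i = d} \<inter> {0..<Suc n})"
    by (subst distinct_length_filter) (simp_all del: upt_Suc)
  also have "\<dots> = (if digit 3 n i = d then 1 else 0)"
  proof (cases "digit 3 n i = d")
    case True
    then have "n div 3^i \<noteq> 0" using assms by (auto simp: digit_def)
    then have "3^i \<le> n" by (simp add: div_eq_0_iff not_less)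
    moreover have "2^i \<le> (3::nat)^i" by (rule power_mono) auto
    then have "i < 3^i" using less_exp[of i] by linarith
    ultimately have "{j. j = i \<and> digit 3 n i = d} \<inter> {0..<Suc n} = {i}" using True by auto
    then show ?thesis using True by simp
  qed simp
  finally show ?thesis .
qed


lemma allzero: "(\<forall>k. (n::nat) div 3^k mod 3 = 0) \<Longrightarrow> n = 0"
proof (induction n rule: less_induct)
  case (less n)
  show ?case
  proof (rule ccontr)
    assume "n \<noteq> 0"
    then have "n div 3 < n" by simp
    moreover have "n div 3 div 3^k mod 3 = 0" for k
    proof -
      have "n div 3 div 3^k = n div 3^(Suc k)" by (simp add: div_mult2_eq)
      then show ?thesis using less.prems[rule_format, of "Suc k"] by (simp only:)
    qed
    ultimately have "n div 3 = 0" using less.IH by blast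
    moreover have "n mod 3 = 0" using less.prems[rule_format, of 0] by simp
    ultimately have "n = 0" using div_mult_mod_eq[of n 3] by simp
    with \<open>n \<noteq> 0\<close> show False ..
  qed
qed
lemma digits_zero: "(\<forall>i\<ge>K. digit 3 n i = 0) \<Longrightarrow> n < 3^K"
proof -
  assume a: "\<forall>i\<ge>K. digit 3 n i = 0"
  have "\<forall>k. n div 3^K div 3^k mod 3 = 0"
    using a by (simp add: digit_def div_mult2_eq[symmetric] power_add[symmetric])
  then have "n div 3^K = 0" by (rule allzero)
  then show ?thesis by (simp add: div_eq_0_iff)
qed

lemma expand: "n mod 3^K = (\<Sum>i<K. digit 3 n i * 3^i)"
proof (induction K)
  case (Suc K)
  have "n mod 3^(Suc K) = 3^K * (n div 3^K mod 3) + n mod 3^K"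
    by (simp only: power_Suc2 mod_mult2_eq)
  then show ?case using Suc by (simp add: digit_def)
qed simp

lemma key:
  fixes c :: "nat \<Rightarrow> nat" and h :: nat
  assumes h: "h \<ge> 1"
    and ci: "\<forall>i\<in>{1..h}. c i \<in> {1,2,3,5,9}"
    and c0: "c 0 \<in> {2,3,4,5,6,7,8,10,11,12,14,18}"
    and sum: "(\<Sum>i<Suc h. c i * 3^i) = 9*3^h - 1"
  shows "c h = 5 \<and> (h \<ge> 2 \<longrightarrow> c (h-1) = 9) \<and> (h = 1 \<longrightarrow> c 0 = 11)"
proof -
  define S where "S k = (\<Sum>i<k. c i * 3^i)" for k
  have bnd: "k \<ge> 1 \<Longrightarrow> k \<le> Suc h \<Longrightarrow> 2 * S k + 27 \<le> 9 * 3^k + 2 * c 0" for k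
  proof (induction k)
    case (Suc k)
    show ?case
    proof (cases "k = 0")
      case True then show ?thesis by (simp add: S_def)
    next
      case False
      then have "k \<in> {1..h}" using Suc.prems by auto
      then have "c k \<in> {1,2,3,5,9}" using ci by blast
      then have "c k \<le> 9" by auto
      then have "c k * 3^k \<le> 9 * 3^k" by simp
      moreover have "S (Suc k) = S k + c k * 3^k" by (simp add: S_def)
      moreover have "2 * S k + 27 \<le> 9 * 3^k + 2 * c 0" using Suc False by simp
      moreover have "(3::nat)^(Suc k) = 3 * 3^k" by simp
      ultimately show ?thesis by linarith
    qed
  qed simp
  have md: "S (Suc k) mod 3 = c 0 mod 3" for k
  proof (induction k)
    case (Suc k)
    have "S (Suc (Suc k)) = S (Suc k) + c (Suc k) * 3^(Suc k)" unfolding S_def by (rule sum.lessThan_Suc)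
    also have "\<dots> = S (Suc k) + (c (Suc k) * 3^k) * 3" by (simp only: power_Suc2 mult.assoc)
    finally show ?case using Suc by (simp only: mod_mult_self1)
  qed (simp add: S_def)
  obtain y where y: "3^h = 3 * (y::nat)" "y \<ge> 1" "y = 3^(h-1)"
    using h by (cases h) auto
  have tot: "S (Suc h) = 27 * y - 1" using sum y(1) by (simp add: S_def)
  have "27 * y - 1 = 3 * (9 * y - 1) + 2" using y(2) by simp
  moreover have "(3 * m + 2) mod 3 = (2::nat)" for m by presburger
  ultimately have "S (Suc h) mod 3 = 2" using tot by metis
  then have "c 0 mod 3 = 2" using md[of h] by simp
  then have c0': "c 0 \<le> 14" using c0 by auto
  have Sh: "S h + c h * (3 * y) = 27 * y - 1" using tot y(1) by (simp add: S_def)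
  have b1: "2 * S h + 27 \<le> 27 * y + 2 * c 0" using bnd[of h] h y(1) by simp
  have ch: "c h \<in> {1,2,3,5,9}" using ci h by auto
  have ch5: "c h = 5"
  proof -
    have "c h \<noteq> 9" using Sh y(2) by (intro notI) simp
    moreover have "c h \<noteq> 1" using Sh b1 c0' y(2) by (intro notI) simp
    moreover have "c h \<noteq> 2" using Sh b1 c0' y(2) by (intro notI) simp
    moreover have "c h \<noteq> 3" using Sh b1 c0' y(2) by (intro notI) simp
    ultimately show ?thesis using ch by auto
  qed
  have p1: "h = 1 \<longrightarrow> c 0 = 11"
  proof
    assume "h = 1"
    then show "c 0 = 11" using Sh ch5 y by (simp add: S_def)
  qed
  have p2: "h \<ge> 2 \<longrightarrow> c (h-1) = 9"
  proof
    assume h2: "h \<ge> 2"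
    have e: "S h = S (h-1) + c (h-1) * y" using h2 y(3) by (cases h) (simp_all add: S_def)
    have b2: "2 * S (h-1) + 27 \<le> 9 * y + 2 * c 0" using bnd[of "h-1"] h2 y(3) by simp
    have ch1: "c (h-1) \<in> {1,2,3,5,9}" using ci h2 by auto
    have E: "S (h-1) + c (h-1) * y + 15 * y = 27 * y - 1" using Sh ch5 e by simp
    have "c (h-1) \<noteq> 1" using E b2 c0' y(2) by (intro notI) simp
    moreover have "c (h-1) \<noteq> 2" using E b2 c0' y(2) by (intro notI) simp
    moreover have "c (h-1) \<noteq> 3" using E b2 c0' y(2) by (intro notI) simp
    moreover have "c (h-1) \<noteq> 5" using E b2 c0' y(2) by (intro notI) simp
    ultimately show "c (h-1) = 9" using ch1 by auto
  qed
  show ?thesis using ch5 p1 p2 by blast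
qed

lemma posl:
  fixes a b c d e :: nat
  assumes "a < 3" "b < 3" "c < 3" "d < 3" "e < 3"
    and "(if a = 1 then 1 else 0) + (if b = 1 then 1 else 0) + (if c = 1 then 1 else 0) + (if d = 1 then 1 else 0) + (if e = 1 then 1 else 0) = (1::nat)"
    and "(if a = 2 then 1 else 0) + (if b = 2 then 1 else 0) + (if c = 2 then 1 else 0) + (if d = 2 then 1 else 0) + (if e = 2 then 1 else 0) = (0::nat)"
  shows "a + 2*b + 3*c + 5*d + 9*e \<in> {1,2,3,5,9} \<and> (a + 2*b + 3*c + 5*d + 9*e = 5 \<longrightarrow> d = 1)
     \<and> (a + 2*b + 3*c + 5*d + 9*e = 9 \<longrightarrow> e = 1)"
proof -
  have "a \<noteq> 2" "b \<noteq> 2" "c \<noteq> 2" "d \<noteq> 2" "e \<noteq> 2" using assms(7) by (simp_all split: if_splits)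
  then have "a \<in> {0,1}" "b \<in> {0,1}" "c \<in> {0,1}" "d \<in> {0,1}" "e \<in> {0,1}" using assms(1-5) by auto
  then show ?thesis using assms(6) by (elim insertE emptyE; simp)
qed

lemma highl:
  fixes a b c d e :: nat
  assumes "a < 3" "b < 3" "c < 3" "d < 3" "e < 3"
    and "(if a = 1 then 1 else 0) + (if b = 1 then 1 else 0) + (if c = 1 then 1 else 0) + (if d = 1 then 1 else 0) + (if e = 1 then 1 else 0) = (0::nat)"
    and "(if a = 2 then 1 else 0) + (if b = 2 then 1 else 0) + (if c = 2 then 1 else 0) + (if d = 2 then 1 else 0) + (if e = 2 then 1 else 0) = (0::nat)"
  shows "a = 0 \<and> b = 0 \<and> c = 0 \<and> d = 0 \<and> e = 0"
proof -
  have "a \<noteq> 2" "b \<noteq> 2" "c \<noteq> 2" "d \<noteq> 2" "e \<noteq> 2" using assms(7) by (simp_all split: if_splits)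
  moreover have "a \<noteq> 1" "b \<noteq> 1" "c \<noteq> 1" "d \<noteq> 1" "e \<noteq> 1" using assms(6) by (simp_all split: if_splits)
  ultimately show ?thesis using assms(1-5) by (intro conjI; arith)
qed

lemma zerol:
  fixes a b c d e :: nat
  assumes "a < 3" "b < 3" "c < 3" "d < 3" "e < 3"
    and "(if a = 1 then 1 else 0) + (if b = 1 then 1 else 0) + (if c = 1 then 1 else 0) + (if d = 1 then 1 else 0) + (if e = 1 then 1 else 0) = (s1::nat)"
    and "(if a = 2 then 1 else 0) + (if b = 2 then 1 else 0) + (if c = 2 then 1 else 0) + (if d = 2 then 1 else 0) + (if e = 2 then 1 else 0) = (s2::nat)"
    and "(s1 = 0 \<and> s2 = 1) \<or> (s1 = 2 \<and> s2 = 0)"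
  shows "a + 2*b + 3*c + 5*d + 9*e \<in> {2,3,4,5,6,7,8,10,11,12,14,18} \<and> (a + 2*b + 3*c + 5*d + 9*e = 11 \<longrightarrow> e = 1)"
proof -
  have "a \<in> {0,1,2}" "b \<in> {0,1,2}" "c \<in> {0,1,2}" "d \<in> {0,1,2}" "e \<in> {0,1,2}" using assms(1-5) by auto
  then show ?thesis using assms(6-8) by (elim insertE emptyE; simp)
qed

lemma cR: "a \<in> {1,2::nat} \<Longrightarrow> b \<in> {1,2::nat} \<Longrightarrow> count {#a * 3^j#} (b * 3^i) = (if a = b \<and> j = i then 1 else 0)"
  using pow3_unique[of a b j i] by auto

theorem lemma4p1:
  fixes l Q n1 n2 n3 n5 n9 :: nat
  assumes "l \<ge> 3"
    and "Q = 3 ^ l"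
    and "n1 + 2 * n2 + 3 * n3 + 5 * n5 + 9 * n9 = Q - 1"
    and "base_terms 3 n1 + base_terms 3 n2 + base_terms 3 n3 + base_terms 3 n5 + base_terms 3 n9
           = mset_set ((\<lambda>i. 3 ^ i) ` {1..l - 2}) + {#2#}
         \<or> base_terms 3 n1 + base_terms 3 n2 + base_terms 3 n3 + base_terms 3 n5 + base_terms 3 n9
           = mset_set ((\<lambda>i. 3 ^ i) ` {1..l - 2}) + {#1, 1#}"
  shows "Q div 9 \<in># base_terms 3 n5 \<and> Q div 27 \<in># base_terms 3 n9"
proof -
  define h where "h = l - 2"
  have lh: "l = h + 2" and h1: "h \<ge> 1" using assms(1) unfolding h_def by arith+
  have Q: "Q = 9 * 3^h" using assms(2) lh by (simp add: power_add)
  define P where "P = base_terms 3 n1 + base_terms 3 n2 + base_terms 3 n3 + base_terms 3 n5 + base_terms 3 n9"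
  define M where "M = mset_set ((\<lambda>i. (3::nat) ^ i) ` {1..h})"
  have e2: "{#2::nat#} = {#2 * 3^0#}" "{#1, 1#} = {#1 * 3^0#} + {#1 * (3::nat)^0#}" by simp_all
  have lm2: "l - 2 = h" using lh by simp
  obtain bb where R: "P = M + (if bb then {#2 * 3^0#} else {#1 * 3^0#} + {#1 * 3^0#})"
  proof (cases "P = M + {#2#}")
    case True then show ?thesis using that[of True] unfolding e2(1) by simp
  next
    case False
    then have "P = M + {#1, 1#}" using assms(4) unfolding P_def M_def lm2 by blast
    then show ?thesis using that[of False] unfolding e2(2) by simp
  qed
  have finM: "finite ((\<lambda>i. (3::nat) ^ i) ` {1..h})" by simp
  have cM1: "count M (1 * 3^i) = (if 1 \<le> i \<and> i \<le> h then 1 else 0)" for i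
  proof -
    have "(1 * 3^i \<in> (\<lambda>i. (3::nat) ^ i) ` {1..h}) = (1 \<le> i \<and> i \<le> h)" by auto
    then show ?thesis unfolding M_def using finM by (simp add: count_mset_set)
  qed
  have cM2: "count M (2 * 3^i) = 0" for i
  proof -
    have "2 * 3^i \<notin> (\<lambda>i. (3::nat) ^ i) ` {1..h}"
    proof
      assume "2 * 3^i \<in> (\<lambda>i. (3::nat) ^ i) ` {1..h}"
      then obtain j where "2 * 3^i = 1 * (3::nat)^j" by auto
      then show False using pow3_unique[of 2 1 i j] by auto
    qed
    then show ?thesis unfolding M_def using finM by (simp add: count_mset_set)
  qed
  define d1 where "d1 i = digit 3 n1 i" for i
  define d2 where "d2 i = digit 3 n2 i" for i
  define d3 where "d3 i = digit 3 n3 i" for i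
  define d5 where "d5 i = digit 3 n5 i" for i
  define d9 where "d9 i = digit 3 n9 i" for i
  have lt3: "d1 i < 3" "d2 i < 3" "d3 i < 3" "d5 i < 3" "d9 i < 3" for i
    by (simp_all add: d1_def d2_def d3_def d5_def d9_def digit_def)
  have cP: "count P (d * 3^i) = (if d1 i = d then 1 else 0) + (if d2 i = d then 1 else 0) + (if d3 i = d then 1 else 0) + (if d5 i = d then 1 else 0) + (if d9 i = d then 1 else 0)"
    if "d \<in> {1,2}" for d i
    unfolding P_def d1_def d2_def d3_def d5_def d9_def using that by (simp add: cnt)
  define RR where "RR = (if bb then {#2 * 3^0#} else {#1 * 3^0#} + {#1 * (3::nat)^0#})"
  have R': "P = M + RR" using R unfolding RR_def .
  have cRR1: "count RR (1 * 3^i) = (if \<not> bb \<and> i = 0 then 2 else 0)" for i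
  proof -
    have a: "count {#2 * (3::nat)^0#} (1 * 3^i) = (0::nat)" using cR[of 2 1 0 i] by simp
    have b: "count {#1 * (3::nat)^0#} (1 * 3^i) = (if i = 0 then 1 else (0::nat))" using cR[of 1 1 0 i] by simp
    show ?thesis unfolding RR_def by (cases bb) (simp_all only: if_True if_False count_union a b, simp_all)
  qed
  have cRR2: "count RR (2 * 3^i) = (if bb \<and> i = 0 then 1 else 0)" for i
  proof -
    have a: "count {#2 * (3::nat)^0#} (2 * 3^i) = (if i = 0 then 1 else (0::nat))" using cR[of 2 2 0 i] by simp
    have b: "count {#1 * (3::nat)^0#} (2 * 3^i) = (0::nat)" using cR[of 1 2 0 i] by simp
    show ?thesis unfolding RR_def by (cases bb) (simp_all only: if_True if_False count_union a b, simp_all)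
  qed
  have F1: "(if d1 i = 1 then 1 else 0) + (if d2 i = 1 then 1 else 0) + (if d3 i = 1 then 1 else 0) + (if d5 i = 1 then 1 else 0) + (if d9 i = 1 then 1 else 0)
      = (if 1 \<le> i \<and> i \<le> h then 1 else 0) + (if \<not> bb \<and> i = 0 then 2 else (0::nat))" for i
  proof -
    have "(if d1 i = 1 then 1 else 0) + (if d2 i = 1 then 1 else 0) + (if d3 i = 1 then 1 else 0) + (if d5 i = 1 then 1 else 0) + (if d9 i = 1 then 1 else 0) = count P (1 * 3^i)" by (rule cP[symmetric]) simp
    also have "\<dots> = count M (1 * 3^i) + count RR (1 * 3^i)" by (simp only: R' count_union)
    also have "\<dots> = (if 1 \<le> i \<and> i \<le> h then 1 else 0) + (if \<not> bb \<and> i = 0 then 2 else (0::nat))"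
      by (simp only: cM1 cRR1)
    finally show ?thesis .
  qed
  have F2: "(if d1 i = 2 then 1 else 0) + (if d2 i = 2 then 1 else 0) + (if d3 i = 2 then 1 else 0) + (if d5 i = 2 then 1 else 0) + (if d9 i = 2 then 1 else 0) = (if bb \<and> i = 0 then 1 else (0::nat))" for i
  proof -
    have "(if d1 i = 2 then 1 else 0) + (if d2 i = 2 then 1 else 0) + (if d3 i = 2 then 1 else 0) + (if d5 i = 2 then 1 else 0) + (if d9 i = 2 then 1 else 0) = count P (2 * 3^i)" by (rule cP[symmetric]) simp
    also have "\<dots> = count M (2 * 3^i) + count RR (2 * 3^i)" by (simp only: R' count_union)
    also have "\<dots> = (if bb \<and> i = 0 then 1 else (0::nat))"
      by (simp only: cM2 cRR2 add_0)
    finally show ?thesis .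
  qed
  have high: "d1 i = 0 \<and> d2 i = 0 \<and> d3 i = 0 \<and> d5 i = 0 \<and> d9 i = 0" if "i \<ge> Suc h" for i
  proof -
    have z1: "(if 1 \<le> i \<and> i \<le> h then 1 else 0) + (if \<not> bb \<and> i = 0 then 2 else (0::nat)) = 0" using that by simp
    have z2: "(if bb \<and> i = 0 then 1 else (0::nat)) = 0" using that by simp
    show ?thesis by (rule highl[OF lt3[of i] trans[OF F1[of i] z1] trans[OF F2[of i] z2]])
  qed
  have bnd: "n1 < 3^Suc h" "n2 < 3^Suc h" "n3 < 3^Suc h" "n5 < 3^Suc h" "n9 < 3^Suc h"
    by (rule digits_zero; use high in \<open>simp add: d1_def d2_def d3_def d5_def d9_def\<close>)+
  have ex: "n1 = (\<Sum>i<Suc h. d1 i * 3^i)" "n2 = (\<Sum>i<Suc h. d2 i * 3^i)" "n3 = (\<Sum>i<Suc h. d3 i * 3^i)"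
     "n5 = (\<Sum>i<Suc h. d5 i * 3^i)" "n9 = (\<Sum>i<Suc h. d9 i * 3^i)"
    using expand bnd by (simp_all add: d1_def d2_def d3_def d5_def d9_def flip: expand)
  define c where "c i = d1 i + 2 * d2 i + 3 * d3 i + 5 * d5 i + 9 * d9 i" for i
  have sumc: "(\<Sum>i<Suc h. c i * 3^i) = 9 * 3^h - 1"
  proof -
    have "(\<Sum>i<Suc h. c i * 3^i) = n1 + 2 * n2 + 3 * n3 + 5 * n5 + 9 * n9"
      unfolding c_def ex by (simp add: sum.distrib sum_distrib_left algebra_simps)
    then show ?thesis using assms(3) Q by simp
  qed
  have pos: "c i \<in> {1,2,3,5,9} \<and> (c i = 5 \<longrightarrow> d5 i = 1) \<and> (c i = 9 \<longrightarrow> d9 i = 1)" if "1 \<le> i" "i \<le> h" for i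
  proof -
    have z1: "(if 1 \<le> i \<and> i \<le> h then 1 else 0) + (if \<not> bb \<and> i = 0 then 2 else (0::nat)) = 1" using that by simp
    have z2: "(if bb \<and> i = 0 then 1 else (0::nat)) = 0" using that by simp
    show ?thesis unfolding c_def by (rule posl[OF lt3[of i] trans[OF F1[of i] z1] trans[OF F2[of i] z2]])
  qed
  have zero: "c 0 \<in> {2,3,4,5,6,7,8,10,11,12,14,18} \<and> (c 0 = 11 \<longrightarrow> d9 0 = 1)"
  proof -
    have z: "((if 1 \<le> (0::nat) \<and> 0 \<le> h then 1 else 0) + (if \<not> bb \<and> (0::nat) = 0 then 2 else (0::nat)) = 0 \<and> (if bb \<and> (0::nat) = 0 then 1 else (0::nat)) = 1)
       \<or> ((if 1 \<le> (0::nat) \<and> 0 \<le> h then 1 else 0) + (if \<not> bb \<and> (0::nat) = 0 then 2 else (0::nat)) = 2 \<and> (if bb \<and> (0::nat) = 0 then 1 else (0::nat)) = 0)"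
      by (cases bb) simp_all
    show ?thesis unfolding c_def by (rule zerol[OF lt3[of 0] F1[of 0] F2[of 0] z])
  qed
  have K: "c h = 5 \<and> (h \<ge> 2 \<longrightarrow> c (h-1) = 9) \<and> (h = 1 \<longrightarrow> c 0 = 11)"
    by (rule key[OF h1 _ _ sumc]) (use pos zero in auto)
  have A: "d5 h = 1" using K pos[of h] h1 by simp
  have B: "d9 (h-1) = 1"
  proof (cases "h = 1")
    case True then show ?thesis using K zero by simp
  next
    case False then show ?thesis using K pos[of "h-1"] h1 by simp
  qed
  have "Q div 9 = 1 * 3^h" using Q by simp
  moreover have "Q div 27 = 1 * 3^(h-1)" using Q h1 by (cases h) simp_all
  ultimately show ?thesis using cnt[of 1 n5 h] cnt[of 1 n9 "h-1"] A B
    by (simp add: d5_def d9_def flip: count_greater_zero_iff)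
qed

end
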